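(* Let $(X_{i,j})_{i,j\ge1}$ be an infinite double array of identically distributed random variables with mean $0$, variance $1$ and $\mathbf{E}\big(|X_{i,j}|^4(\log|X_{i,j}|)^{2+2\varepsilon}\big)<\infty$ for some $\varepsilon>0$. Let $p=p(n)$ with $p/n\to\rho<\infty$, and let $X_n$ be the upper-left $n\times p$ corner of this array. Let $T_n$ be the $n\times p$ matrix with entries $X_{i,j}1_{|X_{i,j}|<\sqrt n/(\log n)^{(1+\varepsilon)/2}}$. Then $P(X_n\ne T_n\text{ infinitely often})=0$. *)

theory Defs
  imports "HOL-Probability.Probability"
begin

definition trunc_level :: "real \<Rightarrow> nat \<Rightarrow> real" where
  "trunc_level eps n = sqrt (real n) / (ln (real n)) powr ((1 + eps) / 2)"

definition trunc_entry ::
  "(nat \<Rightarrow> nat \<Rightarrow> 'a \<Rightarrow> real) \<Rightarrow> real \<Rightarrow> nat \<Rightarrow> nat \<Rightarrow> nat \<Rightarrow> 'a \<Rightarrow> real" where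
  "trunc_entry X eps n i j \<omega> =
     (if \<bar>X i j \<omega>\<bar> < trunc_level eps n then X i j \<omega> else 0)"

definition corner_differs ::
  "(nat \<Rightarrow> nat \<Rightarrow> 'a \<Rightarrow> real) \<Rightarrow> real \<Rightarrow> (nat \<Rightarrow> nat) \<Rightarrow> nat \<Rightarrow> 'a \<Rightarrow> bool" where
  "corner_differs X eps p n \<omega> =
     (\<exists>i\<in>{1..n}. \<exists>j\<in>{1..p n}. X i j \<omega> \<noteq> trunc_entry X eps n i j \<omega>)"

end

theory Submission
  imports Defs "HOL-Real_Asymp.Real_Asymp"
begin

lemma g_mono:
  fixes a x y :: real
  assumes a: "a > 0" and x: "exp (2*a) \<le> x" and xy: "x \<le> y"
  shows "ln x/2 - a*ln(ln x) \<le> ln y/2 - a*ln(ln y)"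
proof (rule DERIV_nonneg_imp_nondecreasing[OF xy])
  fix t assume t: "x \<le> t" "t \<le> y"
  have t1: "exp (2*a) \<le> t" using x t by linarith
  have "1 < exp (2*a)" using a by simp
  hence tpos: "t > 1" using t1 by linarith
  have lt: "2*a \<le> ln t" using t1 tpos by (metis ln_exp ln_le_cancel_iff exp_gt_zero less_trans zero_less_one)
  have lnpos: "ln t > 0" using tpos by simp
  have "DERIV (\<lambda>t. ln t/2 - a*ln(ln t)) t :> (1/t/2 - a*(1/ln t * (1/t)))"
    using tpos lnpos by (auto intro!: derivative_eq_intros)
  moreover have "1/t/2 - a*(1/ln t * (1/t)) \<ge> 0"
  proof -
    have "a*(1/ln t) \<le> 1/2" using lt lnpos a by (simp add: field_simps)
    hence "a*(1/ln t) * (1/t) \<le> 1/2 * (1/t)" using tpos by (intro mult_right_mono) auto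
    thus ?thesis by (simp add: field_simps)
  qed
  ultimately show "\<exists>d. DERIV (\<lambda>t. ln t/2 - a*ln(ln t)) t :> d \<and> d \<ge> 0" by blast
qed

lemma L_exp: assumes "x > 1" shows "sqrt x / ln x powr a = exp (ln x/2 - a*ln(ln x))"
proof -
  have "sqrt x = exp (ln x / 2)" using assms by (simp add: sqrt_def root_powr_inverse powr_def)
  moreover have "ln x powr a = exp (a * ln (ln x))" using assms by (simp add: powr_def)
  ultimately show ?thesis by (simp add: exp_diff)
qed

lemma L_mono:
  assumes a: "a > 0" and x: "exp (2*a) \<le> x" and xy: "x \<le> y" and x1: "x > 1"
  shows "sqrt x / ln x powr a \<le> sqrt y / ln y powr a"
  using L_exp[OF x1] L_exp[of y] x1 xy g_mono[OF a x xy] by simp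


lemma point_m:
  fixes x :: real and m :: nat
  assumes eps: "eps > 0" and m2: "m \<ge> 2"
    and hL: "trunc_level eps m \<le> \<bar>x\<bar>" and h1: "trunc_level eps m > 1"
    and h2: "ln (real m) powr ((1+eps)/2) \<le> real m powr (1/4)"
  shows "real m \<le> x^2 * 4 powr (1+eps) * ln \<bar>x\<bar> powr (1+eps)" and "\<bar>x\<bar> > 1"
proof -
  define a where "a = (1+eps)/2"
  have a: "a > 0" using eps by (simp add: a_def)
  show x1: "\<bar>x\<bar> > 1" using hL h1 by linarith
  have mr: "real m \<ge> 2" using m2 by simp
  have lnm: "ln (real m) > 0" using mr by simp
  define P where "P = ln (real m) powr a"
  have P: "P > 0" using lnm by (simp add: P_def)
  have "sqrt (real m) / P \<le> \<bar>x\<bar>" using hL by (simp add: trunc_level_def P_def a_def)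
  hence s1: "sqrt (real m) \<le> \<bar>x\<bar> * P" using P by (simp add: divide_le_eq mult.commute)
  have "P \<le> real m powr (1/4)" using h2 by (simp add: P_def a_def)
  hence s2: "sqrt (real m) \<le> \<bar>x\<bar> * real m powr (1/4)" using s1 x1
    by (meson abs_ge_zero mult_left_mono order_trans)
  have sq: "sqrt (real m) = real m powr (1/4) * real m powr (1/4)"
    using mr by (simp add: powr_add[symmetric] powr_half_sqrt[symmetric])
  have q: "real m powr (1/4) > 0" using mr by simp
  have q4: "real m powr (1/4) \<le> \<bar>x\<bar>" using s2 q unfolding sq by simp
  have "real m = (real m powr (1/4))^4" using mr by (simp add: powr_realpow[symmetric] powr_powr)
  also have "\<dots> \<le> \<bar>x\<bar>^4" using q4 q by (intro power_mono) auto
  finally have m4: "real m \<le> \<bar>x\<bar>^4" .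
  have "ln (real m) \<le> ln (\<bar>x\<bar>^4)" using m4 mr by (intro ln_mono) auto
  also have "\<dots> = 4 * ln \<bar>x\<bar>" using x1 by (subst ln_realpow) auto
  finally have lnb: "ln (real m) \<le> 4 * ln \<bar>x\<bar>" .
  have "P \<le> (4 * ln \<bar>x\<bar>) powr a" unfolding P_def using lnb lnm a by (intro powr_mono2) auto
  also have "\<dots> = 4 powr a * ln \<bar>x\<bar> powr a" using x1 by (simp add: powr_mult)
  finally have Pb: "P \<le> 4 powr a * ln \<bar>x\<bar> powr a" .
  have "sqrt (real m) \<le> \<bar>x\<bar> * (4 powr a * ln \<bar>x\<bar> powr a)"
    using s1 Pb by (meson abs_ge_zero mult_left_mono order_trans)
  hence "(sqrt (real m))^2 \<le> (\<bar>x\<bar> * (4 powr a * ln \<bar>x\<bar> powr a))^2"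
    by (intro power_mono) auto
  also have "\<dots> = x^2 * (4 powr a)^2 * (ln \<bar>x\<bar> powr a)^2" by (simp add: power_mult_distrib)
  also have "(4 powr a)^2 = (4::real) powr (1+eps)"
    by (simp only: power2_eq_square powr_add[symmetric]) (simp add: a_def)
  also have "(ln \<bar>x\<bar> powr a)^2 = ln \<bar>x\<bar> powr (1+eps)"
    by (simp only: power2_eq_square powr_add[symmetric]) (simp add: a_def)
  finally show "real m \<le> x^2 * 4 powr (1+eps) * ln \<bar>x\<bar> powr (1+eps)" using mr by simp
qed

lemma point_sum:
  fixes x :: real
  assumes eps: "eps > 0" and N2: "N \<ge> 2"
    and h1: "\<And>m. m \<ge> N \<Longrightarrow> trunc_level eps m > 1"
    and h2: "\<And>m. m \<ge> N \<Longrightarrow> ln (real m) powr ((1+eps)/2) \<le> real m powr (1/4)"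
  shows "(\<Sum>m\<le>n. if N \<le> m \<and> trunc_level eps m \<le> \<bar>x\<bar> then real m else 0)
          \<le> 16 powr (1+eps) * (\<bar>x\<bar>^4 * \<bar>ln \<bar>x\<bar>\<bar> powr (2+2*eps))"
proof -
  define S where "S = {m\<in>{..n}. N \<le> m \<and> trunc_level eps m \<le> \<bar>x\<bar>}"
  have fS: "finite S" by (simp add: S_def)
  have eq: "(\<Sum>m\<le>n. if N \<le> m \<and> trunc_level eps m \<le> \<bar>x\<bar> then real m else 0) = (\<Sum>m\<in>S. real m)"
    unfolding S_def by (rule sum.inter_filter[symmetric]) simp
  show ?thesis
  proof (cases "S = {}")
    case True
    thus ?thesis unfolding eq by simp
  next
    case False
    then obtain m0 where m0: "m0 \<in> S" by auto
    have x1: "\<bar>x\<bar> > 1" using point_m(2)[OF eps _ _ h1 h2, of m0 x] m0 N2 by (auto simp: S_def)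
    define B where "B = x^2 * 4 powr (1+eps) * ln \<bar>x\<bar> powr (1+eps)"
    have mB: "real m \<le> B" if "m \<in> S" for m
      using point_m(1)[OF eps _ _ h1 h2, of m x] that N2 by (auto simp: S_def B_def)
    have B0: "B \<ge> 0" using mB m0 by (meson of_nat_0_le_iff order_trans)
    have sub: "S \<subseteq> {1..nat \<lfloor>B\<rfloor>}"
    proof
      fix m assume "m \<in> S"
      hence "real m \<le> B" "m \<ge> 1" using mB N2 by (auto simp: S_def)
      thus "m \<in> {1..nat \<lfloor>B\<rfloor>}"
        by (metis atLeastAtMost_iff le_floor_iff of_int_of_nat_eq nat_int nat_mono)
    qed
    have "card S \<le> card {1..nat \<lfloor>B\<rfloor>}" by (rule card_mono[OF _ sub]) auto
    hence "card S \<le> nat \<lfloor>B\<rfloor>" by simp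
    hence "real (card S) \<le> real (nat \<lfloor>B\<rfloor>)" by simp
    also have "\<dots> = of_int \<lfloor>B\<rfloor>" using B0 by simp
    also have "\<dots> \<le> B" by simp
    finally have cS: "real (card S) \<le> B" .
    have "(\<Sum>m\<in>S. real m) \<le> real (card S) * B" using sum_bounded_above[of S "\<lambda>m. real m" B] mB by simp
    also have "\<dots> \<le> B * B" using cS B0 by (intro mult_right_mono) auto
    also have "B * B = x^4 * (4 powr (1+eps) * 4 powr (1+eps)) * (ln \<bar>x\<bar> powr (1+eps) * ln \<bar>x\<bar> powr (1+eps))"
      by (simp add: B_def algebra_simps power2_eq_square power4_eq_xxxx)
    also have "4 powr (1+eps) * 4 powr (1+eps) = (16::real) powr (1+eps)"
      by (simp add: powr_mult[symmetric])
    also have "ln \<bar>x\<bar> powr (1+eps) * ln \<bar>x\<bar> powr (1+eps) = \<bar>ln \<bar>x\<bar>\<bar> powr (2+2*eps)"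
      using x1 by (simp add: powr_add[symmetric])
    finally show ?thesis unfolding eq by (simp add: mult_ac)
  qed
qed

lemma summable_part:
  fixes X :: "'a \<Rightarrow> real"
  assumes P: "prob_space M" and Xm[measurable]: "X \<in> borel_measurable M"
    and mom: "integrable M (\<lambda>\<omega>. \<bar>X \<omega>\<bar> ^ 4 * \<bar>ln \<bar>X \<omega>\<bar>\<bar> powr (2 + 2 * eps))"
    and ps: "\<And>x n. (\<Sum>m\<le>n. if N \<le> m \<and> trunc_level eps m \<le> \<bar>x\<bar> then real m else 0)
          \<le> 16 powr (1+eps) * (\<bar>x\<bar>^4 * \<bar>ln \<bar>x\<bar>\<bar> powr (2+2*eps))"
  shows "summable (\<lambda>m. if N \<le> m then real m * measure M {\<omega>\<in>space M. trunc_level eps m \<le> \<bar>X \<omega>\<bar>} else 0)"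
proof (rule bounded_imp_summable)
  interpret prob_space M by (fact P)
  fix n
  define S where "S m = {\<omega>\<in>space M. trunc_level eps m \<le> \<bar>X \<omega>\<bar>}" for m
  have Ss[measurable]: "S m \<in> sets M" for m unfolding S_def by measurable
  have int: "integrable M (\<lambda>\<omega>. (if N \<le> m then real m else 0) * indicator (S m) \<omega>)" for m
    using Ss by (intro integrable_mult_right) (auto simp: integrable_indicator_iff Int_absorb2 sets.sets_into_space less_top[symmetric])
  have "(\<Sum>m\<le>n. if N \<le> m then real m * measure M (S m) else 0)
      = (\<Sum>m\<le>n. integral\<^sup>L M (\<lambda>\<omega>. (if N \<le> m then real m else 0) * indicator (S m) \<omega>))"
    using Ss by (intro sum.cong) (auto simp: Int_absorb2 sets.sets_into_space)
  also have "\<dots> = integral\<^sup>L M (\<lambda>\<omega>. \<Sum>m\<le>n. (if N \<le> m then real m else 0) * indicator (S m) \<omega>)"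
    using Bochner_Integration.integral_sum[where M=M and I="{..n}" and f="\<lambda>m \<omega>. (if N \<le> m then real m else 0) * indicator (S m) \<omega>"] int by simp
  also have "\<dots> \<le> integral\<^sup>L M (\<lambda>\<omega>. 16 powr (1+eps) * (\<bar>X \<omega>\<bar> ^ 4 * \<bar>ln \<bar>X \<omega>\<bar>\<bar> powr (2 + 2 * eps)))"
  proof (rule integral_mono')
    show "integrable M (\<lambda>\<omega>. 16 powr (1+eps) * (\<bar>X \<omega>\<bar> ^ 4 * \<bar>ln \<bar>X \<omega>\<bar>\<bar> powr (2 + 2 * eps)))"
      using mom by (rule integrable_mult_right)
    fix \<omega> assume w: "\<omega> \<in> space M"
    show "0 \<le> 16 powr (1+eps) * (\<bar>X \<omega>\<bar> ^ 4 * \<bar>ln \<bar>X \<omega>\<bar>\<bar> powr (2 + 2 * eps))" by simp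
    have "(\<Sum>m\<le>n. (if N \<le> m then real m else 0) * indicator (S m) \<omega>)
        = (\<Sum>m\<le>n. if N \<le> m \<and> trunc_level eps m \<le> \<bar>X \<omega>\<bar> then real m else 0)"
      using w by (intro sum.cong) (auto simp: S_def indicator_def)
    also have "\<dots> \<le> 16 powr (1+eps) * (\<bar>X \<omega>\<bar> ^ 4 * \<bar>ln \<bar>X \<omega>\<bar>\<bar> powr (2 + 2 * eps))" by (rule ps)
    finally show "(\<Sum>m\<le>n. (if N \<le> m then real m else 0) * indicator (S m) \<omega>) \<le> \<dots>" .
  qed
  finally show "(\<Sum>m\<le>n. if N \<le> m then real m * measure M {\<omega>\<in>space M. trunc_level eps m \<le> \<bar>X \<omega>\<bar>} else 0)
     \<le> integral\<^sup>L M (\<lambda>\<omega>. 16 powr (1+eps) * (\<bar>X \<omega>\<bar> ^ 4 * \<bar>ln \<bar>X \<omega>\<bar>\<bar> powr (2 + 2 * eps)))"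
    unfolding S_def by simp
next
  fix n show "0 \<le> (if N \<le> n then real n * measure M {\<omega>\<in>space M. trunc_level eps n \<le> \<bar>X \<omega>\<bar>} else 0)" by simp
qed

lemma H1: "0 < (C::nat) \<Longrightarrow> 1 \<le> j \<Longrightarrow> j \<le> C * ((j-1) div C + 1)"
proof -
  assume C: "0 < C" and j: "1 \<le> j"
  define q where "q = (j-1) div C"
  define r where "r = (j-1) mod C"
  have e: "j - 1 = C * q + r" by (simp add: q_def r_def)
  moreover have "r < C" using C by (simp add: r_def)
  ultimately have "j \<le> C * q + C" using j by linarith
  thus ?thesis by (simp add: q_def algebra_simps)
qed
lemma H2: "1 \<le> j \<Longrightarrow> (C::nat) * ((j-1) div C) < j"
proof -
  assume j: "1 \<le> j"
  have "C * ((j-1) div C) \<le> j - 1" by (metis div_times_less_eq_dividend mult.commute) 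
  moreover have "j - 1 < j" using j by simp
  ultimately show ?thesis by (rule order_le_less_trans)
qed
lemma H3: "0 < (C::nat) \<Longrightarrow> 1 \<le> j \<Longrightarrow> j \<le> C*n \<Longrightarrow> (j-1) div C < n"
  by (simp add: div_less_iff_less_mult mult.commute)
lemma freq_sets:
  fixes D :: "nat \<Rightarrow> 'a set"
  assumes "\<And>n. D n \<in> sets M"
  shows "{\<omega>\<in>space M. \<exists>\<^sub>\<infinity>n. \<omega> \<in> D n} \<in> sets M"
proof -
  have "{\<omega>\<in>space M. \<exists>\<^sub>\<infinity>n. \<omega> \<in> D n} = space M \<inter> limsup D"
    by (auto simp: limsup_INF_SUP INFM_nat_le)
  thus ?thesis using assms by (simp add: measurable_limsup)
qed

lemma A1: assumes "a > 0" shows "eventually (\<lambda>n::nat. ln (real n) powr a \<le> real n powr (1/4)) sequentially"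
  using assms by real_asymp
lemma A2: assumes "a > 0" shows "filterlim (\<lambda>n::nat. sqrt (real n) / ln (real n) powr a) at_top sequentially"
  using assms by real_asymp

theorem lemma2:
  fixes M :: "'a measure"
    and X :: "nat \<Rightarrow> nat \<Rightarrow> 'a \<Rightarrow> real"
    and p :: "nat \<Rightarrow> nat"
    and eps \<rho> :: real
  assumes "prob_space M"
    and rv: "\<And>i j. i \<ge> 1 \<Longrightarrow> j \<ge> 1 \<Longrightarrow> X i j \<in> borel_measurable M"
    and ident: "\<And>i j. i \<ge> 1 \<Longrightarrow> j \<ge> 1 \<Longrightarrow>
                   distr M borel (X i j) = distr M borel (X 1 1)"
    and int1: "integrable M (X 1 1)"
    and mean: "prob_space.expectation M (X 1 1) = 0"
    and int2: "integrable M (\<lambda>\<omega>. (X 1 1 \<omega>)\<^sup>2)"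
    and var: "prob_space.variance M (X 1 1) = 1"
    and eps: "eps > 0"
    and moment: "integrable M (\<lambda>\<omega>. \<bar>X 1 1 \<omega>\<bar> ^ 4 * \<bar>ln \<bar>X 1 1 \<omega>\<bar>\<bar> powr (2 + 2 * eps))"
    and ratio: "(\<lambda>n. real (p n) / real n) \<longlonglongrightarrow> \<rho>"
  shows "{\<omega> \<in> space M. \<exists>\<^sub>\<infinity>n. corner_differs X eps p n \<omega>} \<in> sets M
       \<and> measure M {\<omega> \<in> space M. \<exists>\<^sub>\<infinity>n. corner_differs X eps p n \<omega>} = 0"
proof -
  interpret prob_space M by fact
  define a where "a = (1+eps)/2"
  have a: "a > 0" using eps by (simp add: a_def)
  define L where "L = trunc_level eps"
  have Ld: "L m = sqrt (real m) / ln (real m) powr a" for m by (simp add: L_def trunc_level_def a_def)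
  define C :: nat where "C = nat \<lceil>\<rho>\<rceil> + 1"
  have C: "C > 0" by (simp add: C_def)
  have ev1: "eventually (\<lambda>n. real (p n) / real n < \<rho> + 1) sequentially"
    using ratio by (rule order_tendstoD) simp
  have ev2: "eventually (\<lambda>n::nat. L n > 1) sequentially"
    using filterlim_at_top_dense[THEN iffD1, OF A2[OF a], rule_format, of 1] by (simp add: Ld)
  have ev3: "eventually (\<lambda>n::nat. real n \<ge> exp (2*a) + 2) sequentially"
    by (rule eventually_ge_at_top[THEN eventually_mono, of "nat \<lceil>exp (2*a) + 2\<rceil>"]) linarith
  obtain N where NN: "\<And>n. n \<ge> N \<Longrightarrow> real (p n) / real n < \<rho> + 1 \<and> L n > 1 \<and> real n \<ge> exp (2*a) + 2
       \<and> ln (real n) powr a \<le> real n powr (1/4)"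
    using eventually_conj[OF ev1 eventually_conj[OF ev2 eventually_conj[OF ev3 A1[OF a]]]]
    unfolding eventually_sequentially by blast
  have "exp (2*a) + 2 \<le> real N" using NN[of N] by simp
  moreover have "exp (2*a) > 0" by simp
  ultimately have N2: "N \<ge> 2" by linarith
  have pC: "p n \<le> C * n" if "n \<ge> N" for n
  proof -
    have n0: "real n > 0" using that N2 by simp
    have "real (p n) < (\<rho> + 1) * real n" using NN[OF that] n0 by (simp add: divide_less_eq)
    also have "\<dots> \<le> real C * real n" using n0 by (intro mult_right_mono) (auto simp: C_def, linarith)
    finally show ?thesis by (metis of_nat_less_iff of_nat_mult less_imp_le)
  qed
  have Lmono: "L m \<le> L n" if "N \<le> m" "m \<le> n" for m n
  proof -
    have "exp (2*a) + 2 \<le> real m" using NN[OF that(1)] by simp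
    moreover have "exp (2*a) > 0" by simp
    ultimately have "real m > 1" "exp (2*a) \<le> real m" by linarith+
    thus ?thesis unfolding Ld using L_mono[OF a, of "real m" "real n"] that by simp
  qed
  define E where "E i j m = {\<omega>\<in>space M. L m \<le> \<bar>X i j \<omega>\<bar>}" for i j m
  have Es: "E i j m \<in> sets M" if "i \<ge> 1" "j \<ge> 1" for i j m
  proof -
    have [measurable]: "X i j \<in> borel_measurable M" using rv that by blast
    show ?thesis unfolding E_def by measurable
  qed
  define G where "G t = measure M {\<omega>\<in>space M. t \<le> \<bar>X 1 1 \<omega>\<bar>}" for t
  have EG: "measure M (E i j m) = G (L m)" if "i \<ge> 1" "j \<ge> 1" for i j m
  proof -
    have Xm[measurable]: "X i j \<in> borel_measurable M" "X 1 1 \<in> borel_measurable M" using rv that by auto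
    have S: "{y::real. L m \<le> \<bar>y\<bar>} \<in> sets borel" by measurable
    have "measure (distr M borel (X i j)) {y. L m \<le> \<bar>y\<bar>} = measure M (X i j -` {y. L m \<le> \<bar>y\<bar>} \<inter> space M)"
      by (rule measure_distr[OF Xm(1) S])
    also have "X i j -` {y. L m \<le> \<bar>y\<bar>} \<inter> space M = E i j m" by (auto simp: E_def)
    finally have 1: "measure M (E i j m) = measure (distr M borel (X i j)) {y. L m \<le> \<bar>y\<bar>}" by simp
    have "measure (distr M borel (X 1 1)) {y. L m \<le> \<bar>y\<bar>} = measure M (X 1 1 -` {y. L m \<le> \<bar>y\<bar>} \<inter> space M)"
      by (rule measure_distr[OF Xm(2) S])
    also have "X 1 1 -` {y. L m \<le> \<bar>y\<bar>} \<inter> space M = {\<omega>\<in>space M. L m \<le> \<bar>X 1 1 \<omega>\<bar>}" by auto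
    finally have 2: "measure (distr M borel (X 1 1)) {y. L m \<le> \<bar>y\<bar>} = G (L m)" by (simp add: G_def)
    have "measure M (E i j m) = measure (distr M borel (X 1 1)) {y. L m \<le> \<bar>y\<bar>}"
      unfolding 1 ident[OF that] ..
    also have "\<dots> = G (L m)" by (rule 2)
    finally show ?thesis .
  qed
  define B where "B m = (if N \<le> m then (\<Union>j\<in>{1..C*m}. E m j m) \<union> (\<Union>i\<in>{1..m}. \<Union>j\<in>{C*(m-1)<..C*m}. E i j m) else {})" for m
  have Bs: "B m \<in> sets M" for m
    unfolding B_def using N2 by (auto intro!: sets.finite_UN Es)
  have Bm: "measure M (B m) \<le> 2 * real C * (if N \<le> m then real m * G (L m) else 0)" for m
  proof (cases "N \<le> m")
    case True
    have m1: "m \<ge> 1" using True N2 by simp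
    have "measure M (B m) \<le> measure M (\<Union>j\<in>{1..C*m}. E m j m) + measure M (\<Union>i\<in>{1..m}. \<Union>j\<in>{C*(m-1)<..C*m}. E i j m)"
      unfolding B_def using True m1 by (simp only: if_True) (intro measure_Un_le; auto intro!: sets.finite_UN Es)
    also have "measure M (\<Union>j\<in>{1..C*m}. E m j m) \<le> (\<Sum>j\<in>{1..C*m}. measure M (E m j m))"
      using m1 by (intro measure_UNION_le) (auto intro!: Es)
    also have "\<dots> = real C * real m * G (L m)" using m1 by (simp add: EG)
    also have "measure M (\<Union>i\<in>{1..m}. \<Union>j\<in>{C*(m-1)<..C*m}. E i j m) \<le> (\<Sum>i\<in>{1..m}. measure M (\<Union>j\<in>{C*(m-1)<..C*m}. E i j m))"
      by (intro measure_UNION_le) (auto intro!: sets.finite_UN Es)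
    also have "\<dots> \<le> (\<Sum>i\<in>{1..m}. \<Sum>j\<in>{C*(m-1)<..C*m}. measure M (E i j m))"
      by (intro sum_mono measure_UNION_le) (auto intro!: Es)
    also have "\<dots> = real m * (real (C*m - C*(m-1)) * G (L m))" using m1 by (simp add: EG of_nat_diff)
    also have "C*m - C*(m-1) = C" using m1 by (simp add: algebra_simps diff_mult_distrib2)
    finally show ?thesis using True by (simp add: algebra_simps)
  next
    case False thus ?thesis by (simp add: B_def)
  qed
  have sumh: "summable (\<lambda>m. if N \<le> m then real m * G (L m) else 0)"
    unfolding G_def L_def
  proof (rule summable_part[OF \<open>prob_space M\<close> _ moment])
    show "X 1 1 \<in> borel_measurable M" using rv by simp
    fix x :: real and n
    show "(\<Sum>m\<le>n. if N \<le> m \<and> trunc_level eps m \<le> \<bar>x\<bar> then real m else 0)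
          \<le> 16 powr (1+eps) * (\<bar>x\<bar>^4 * \<bar>ln \<bar>x\<bar>\<bar> powr (2+2*eps))"
      using point_sum[OF eps N2, of x n] NN by (simp add: L_def a_def)
  qed
  have sumB: "summable (\<lambda>m. measure M (B m))"
    by (rule summable_comparison_test'[OF summable_mult[OF sumh, of "2 * real C"], of 0]) (simp add: Bm)
  have null: "limsup B \<in> null_sets M"
    by (rule borel_cantelli_limsup1[OF Bs _ sumB]) (simp add: less_top[symmetric])
  define D where "D n = {\<omega>\<in>space M. corner_differs X eps p n \<omega>}" for n
  have Ds: "D n \<in> sets M" for n
  proof -
    have "D n = (\<Union>i\<in>{1..n}. \<Union>j\<in>{1..p n}. {\<omega>\<in>space M. X i j \<omega> \<noteq> trunc_entry X eps n i j \<omega>})"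
      by (auto simp: D_def corner_differs_def)
    also have "\<dots> \<in> sets M"
    proof (intro sets.finite_UN ballI finite_atLeastAtMost)
      fix i j assume "i \<in> {1..n}" "j \<in> {1..p n}"
      hence [measurable]: "X i j \<in> borel_measurable M" using rv by auto
      show "{\<omega>\<in>space M. X i j \<omega> \<noteq> trunc_entry X eps n i j \<omega>} \<in> sets M"
        unfolding trunc_entry_def by measurable
    qed
    finally show ?thesis .
  qed
  have seteq: "{\<omega> \<in> space M. \<exists>\<^sub>\<infinity>n. corner_differs X eps p n \<omega>} = {\<omega>\<in>space M. \<exists>\<^sub>\<infinity>n. \<omega> \<in> D n}"
    by (auto simp: D_def)
  have meas: "{\<omega> \<in> space M. \<exists>\<^sub>\<infinity>n. corner_differs X eps p n \<omega>} \<in> sets M"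
    unfolding seteq by (rule freq_sets[OF Ds])
  have sub: "{\<omega> \<in> space M. \<exists>\<^sub>\<infinity>n. corner_differs X eps p n \<omega>} \<subseteq> limsup B"
  proof
    fix \<omega> assume "\<omega> \<in> {\<omega> \<in> space M. \<exists>\<^sub>\<infinity>n. corner_differs X eps p n \<omega>}"
    hence w: "\<omega> \<in> space M" and fr: "\<exists>\<^sub>\<infinity>n. corner_differs X eps p n \<omega>" by auto
    show "\<omega> \<in> limsup B"
    proof (rule ccontr)
      assume "\<omega> \<notin> limsup B"
      then obtain K0 where K0: "\<And>m. m \<ge> K0 \<Longrightarrow> \<omega> \<notin> B m" by (auto simp: limsup_INF_SUP)
      define K where "K = max K0 N"
      define mm where "mm i j = max i ((j-1) div C + 1)" for i j
      have claim1: "\<bar>X i j \<omega>\<bar> < L (mm i j)" if ij: "1 \<le> i" "1 \<le> j" and Km: "K \<le> mm i j" for i j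
      proof -
        define m where "m = mm i j"
        have mN: "N \<le> m" "K0 \<le> m" using Km by (auto simp: K_def m_def)
        have nB: "\<omega> \<notin> B m" using K0 mN by simp
        have nB1: "\<omega> \<notin> (\<Union>j\<in>{1..C*m}. E m j m)" and nB2: "\<omega> \<notin> (\<Union>i\<in>{1..m}. \<Union>j\<in>{C*(m-1)<..C*m}. E i j m)"
          using nB mN(1) unfolding B_def by simp_all
        have jm: "j \<le> C * m"
          using H1[OF C ij(2)] mult_le_mono2[of "(j-1) div C + 1" m C] by (simp add: m_def mm_def)
        have im: "i \<le> m" by (simp add: m_def mm_def)
        show ?thesis
        proof (cases "i = m")
          case True
          have "j \<in> {1..C*m}" using ij jm by simp
          hence "\<omega> \<notin> E m j m" using nB1 by blast
          thus ?thesis using w True unfolding E_def m_def by simp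
        next
          case False
          hence "(j-1) div C + 1 = m" using im by (auto simp: m_def mm_def)
          hence "m - 1 = (j-1) div C" by simp
          hence "C * (m-1) < j" using H2[OF ij(2), of C] by simp
          hence "j \<in> {C*(m-1)<..C*m}" "i \<in> {1..m}" using ij jm im by simp_all
          hence "\<omega> \<notin> E i j m" using nB2 by blast
          thus ?thesis using w unfolding E_def m_def by simp
        qed
      qed
      define R where "R = (\<Sum>i\<in>{1..K}. \<Sum>j\<in>{1..C*K}. \<bar>X i j \<omega>\<bar>)"
      have Rb: "\<bar>X i j \<omega>\<bar> \<le> R" if "i \<in> {1..K}" "j \<in> {1..C*K}" for i j
      proof -
        have "\<bar>X i j \<omega>\<bar> \<le> (\<Sum>j\<in>{1..C*K}. \<bar>X i j \<omega>\<bar>)"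
          using that by (intro member_le_sum) auto
        also have "\<dots> \<le> R" unfolding R_def using that
          by (intro member_le_sum[where f="\<lambda>i. \<Sum>j\<in>{1..C*K}. \<bar>X i j \<omega>\<bar>"]) (auto intro: sum_nonneg)
        finally show ?thesis .
      qed
      have evR: "eventually (\<lambda>n. L n > R) sequentially"
        using filterlim_at_top_dense[THEN iffD1, OF A2[OF a], rule_format, of R] by (simp add: Ld)
      have "eventually (\<lambda>n. \<not> corner_differs X eps p n \<omega>) sequentially"
        using evR eventually_ge_at_top[of K]
      proof eventually_elim
        case (elim n)
        have nK: "K \<le> n" and nN: "N \<le> n" using elim by (auto simp: K_def)
        have "\<bar>X i j \<omega>\<bar> < L n" if ij: "i \<in> {1..n}" "j \<in> {1..p n}" for i j
        proof (cases "K \<le> mm i j")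
          case True
          have "j \<le> C * n" using ij pC[OF nN] by auto
          hence "(j-1) div C < n" using H3[OF C] ij by auto
          hence "mm i j \<le> n" using ij by (auto simp: mm_def)
          moreover have "N \<le> mm i j" using True by (simp add: K_def)
          ultimately have "L (mm i j) \<le> L n" by (rule Lmono[rotated])
          thus ?thesis using claim1[of i j] True ij by auto
        next
          case False
          hence "i \<le> K" "(j-1) div C + 1 \<le> K" by (auto simp: mm_def)
          hence "j \<le> C * K" using H1[OF C, of j] mult_le_mono2[of "(j-1) div C + 1" K C] ij by auto
          hence "\<bar>X i j \<omega>\<bar> \<le> R" using Rb[of i j] ij \<open>i \<le> K\<close> by auto
          thus ?thesis using elim by simp
        qed
        thus ?case by (auto simp: corner_differs_def trunc_entry_def L_def)
      qed
      thus False using fr by (simp add: frequently_def cofinite_eq_sequentially)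
    qed
  qed
  have "{\<omega> \<in> space M. \<exists>\<^sub>\<infinity>n. corner_differs X eps p n \<omega>} \<in> null_sets M"
    by (rule null_sets_subset[OF null meas sub])
  thus ?thesis using meas by (simp add: measure_eq_0_null_sets)
qed

end
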